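(* Let $r=\frac{e^2-1}{e^2+1}$ and let $\mathbb{D}_K(1)=\{x\in\mathbb{R}^2:|x|<r\}$ be the Klein unit disc. For $x\in\mathbb{D}_K(1)$ and $\xi\in T_x\mathbb{D}_K(1)\cong\mathbb{R}^2$, $\xi\neq0$, define $$\mathcal{F}(x,\xi)=\coth\big(d_K(x,\mathfrak{a})\big)\,\alpha_K(x,\xi),$$ where $\mathfrak{a}=\mathfrak{a}(x,\xi)$ is the unique point $x+s\xi$ with $s>0$ and $|x+s\xi|=r$, and set $\mathcal{F}(x,0)=0$. Then $\mathcal{F}=\alpha_F+\beta_F$ with $$\alpha_F(x,\xi)=\frac{\sqrt{(r^2-|x|^2)|\xi|^2+\langle x,\xi\rangle^2}}{r^2-|x|^2},\qquad \beta_F(x,\xi)=\frac{(1-r^2)\langle x,\xi\rangle}{(r^2-|x|^2)(1-|x|^2)}.$$ Moreover $\alpha_F$ is a Riemannian metric on $\mathbb{D}_K(1)$, $\beta_F=df$ is exact (hence closed) with $f(x)=\tfrac12\log\frac{1-|x|^2}{r^2-|x|^2}$, and $$\|\beta_F\|_{\alpha_F}^2=\frac{|x|^2(1-r^2)^2}{r^2(1-|x|^2)^2}<1\quad\text{on }\mathbb{D}_K(1),$$ so that $\mathcal{F}$ is a Randers metric on $\mathbb{D}_K(1)$ with closed $1$-form.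
   Context: $|\cdot|$ and $\langle\cdot,\cdot\rangle$ are the Euclidean norm and inner product on $\mathbb{R}^2$. The Klein distance on $\mathbb{D}_E(1)=\{|x|<1\}$ is $d_K(x,y)=\tfrac12\log\frac{|x-a||y-b|}{|y-a||x-b|}$ for $x\ne y$, where $a$ (resp. $b$) is the intersection of the Euclidean ray from $x$ through $y$ (resp. from $y$ through $x$) with the unit circle; $d_K(x,x)=0$. The Klein (Riemannian) metric on $\mathbb{D}_E(1)$ is $\alpha_K(x,\xi)=\frac{\sqrt{(1-|x|^2)|\xi|^2+\langle x,\xi\rangle^2}}{1-|x|^2}$. A Randers metric is $F=\alpha+\beta$ with $\alpha=\sqrt{a_{ij}(x)\xi^i\xi^j}$ Riemannian and $\beta=b_i(x)\xi^i$ a $1$-form with $\|\beta\|_\alpha^2=a^{ij}b_ib_j<1$. *)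

theory Defs
  imports "HOL-Analysis.Analysis"
begin

definition klein_r :: real where
  "klein_r = (exp 2 - 1) / (exp 2 + 1)"

definition ray_hit :: "real^2 \<Rightarrow> real^2 \<Rightarrow> real \<Rightarrow> real^2" where
  "ray_hit x v R = (THE p. \<exists>s>0. p = x + s *\<^sub>R v \<and> norm p = R)"

definition klein_dist :: "real^2 \<Rightarrow> real^2 \<Rightarrow> real" where
  "klein_dist x y =
     (if x = y then 0 else
        (let a = ray_hit x (y - x) 1; b = ray_hit y (x - y) 1
         in ln ((dist x a * dist y b) / (dist y a * dist x b)) / 2))"

definition alpha_K :: "real^2 \<Rightarrow> real^2 \<Rightarrow> real" where
  "alpha_K x \<xi> = sqrt ((1 - (norm x)\<^sup>2) * (norm \<xi>)\<^sup>2 + (x \<bullet> \<xi>)\<^sup>2) / (1 - (norm x)\<^sup>2)"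

definition coth :: "real \<Rightarrow> real" where
  "coth t = cosh t / sinh t"

definition FF :: "real^2 \<Rightarrow> real^2 \<Rightarrow> real" where
  "FF x \<xi> = (if \<xi> = 0 then 0 else coth (klein_dist x (ray_hit x \<xi> klein_r)) * alpha_K x \<xi>)"

definition alpha_F :: "real^2 \<Rightarrow> real^2 \<Rightarrow> real" where
  "alpha_F x \<xi> = sqrt ((klein_r\<^sup>2 - (norm x)\<^sup>2) * (norm \<xi>)\<^sup>2 + (x \<bullet> \<xi>)\<^sup>2) / (klein_r\<^sup>2 - (norm x)\<^sup>2)"

definition beta_F :: "real^2 \<Rightarrow> real^2 \<Rightarrow> real" where
  "beta_F x \<xi> = ((1 - klein_r\<^sup>2) * (x \<bullet> \<xi>)) / ((klein_r\<^sup>2 - (norm x)\<^sup>2) * (1 - (norm x)\<^sup>2))"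

definition f_pot :: "real^2 \<Rightarrow> real" where
  "f_pot x = ln ((1 - (norm x)\<^sup>2) / (klein_r\<^sup>2 - (norm x)\<^sup>2)) / 2"

fun C_k :: "nat \<Rightarrow> (real^2) set \<Rightarrow> (real^2 \<Rightarrow> real) \<Rightarrow> bool" where
  "C_k 0 S f = continuous_on S f"
| "C_k (Suc k) S f = (\<exists>D. (\<forall>x\<in>S. (f has_derivative D x) (at x)) \<and>
                          (\<forall>i. C_k k S (\<lambda>x. D x (axis i 1))))"

definition smooth_on :: "(real^2) set \<Rightarrow> (real^2 \<Rightarrow> real) \<Rightarrow> bool" where
  "smooth_on S f \<longleftrightarrow> (\<forall>k. C_k k S f)"

definition metric_coeffs :: "(real^2 \<Rightarrow> real^2 \<Rightarrow> real) \<Rightarrow> real^2 \<Rightarrow> real^2^2" where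
  "metric_coeffs \<alpha> x = (\<chi> i j. ((\<alpha> x (axis i 1 + axis j 1))\<^sup>2
                               - (\<alpha> x (axis i 1))\<^sup>2 - (\<alpha> x (axis j 1))\<^sup>2) / 2)"

definition form_coeffs :: "(real^2 \<Rightarrow> real^2 \<Rightarrow> real) \<Rightarrow> real^2 \<Rightarrow> real^2" where
  "form_coeffs \<beta> x = (\<chi> i. \<beta> x (axis i 1))"

definition riemannian_on :: "(real^2) set \<Rightarrow> (real^2 \<Rightarrow> real^2 \<Rightarrow> real) \<Rightarrow> bool" where
  "riemannian_on S \<alpha> \<longleftrightarrow>
     (\<forall>x\<in>S. \<forall>\<xi>. \<alpha> x \<xi> = sqrt (\<xi> \<bullet> (metric_coeffs \<alpha> x *v \<xi>))) \<and>
     (\<forall>x\<in>S. transpose (metric_coeffs \<alpha> x) = metric_coeffs \<alpha> x) \<and>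
     (\<forall>x\<in>S. \<forall>\<xi>. \<xi> \<noteq> 0 \<longrightarrow> \<xi> \<bullet> (metric_coeffs \<alpha> x *v \<xi>) > 0) \<and>
     (\<forall>i j. smooth_on S (\<lambda>x. metric_coeffs \<alpha> x $ i $ j))"

definition one_form_on :: "(real^2) set \<Rightarrow> (real^2 \<Rightarrow> real^2 \<Rightarrow> real) \<Rightarrow> bool" where
  "one_form_on S \<beta> \<longleftrightarrow>
     (\<forall>x\<in>S. \<forall>\<xi>. \<beta> x \<xi> = form_coeffs \<beta> x \<bullet> \<xi>) \<and>
     (\<forall>i. smooth_on S (\<lambda>x. form_coeffs \<beta> x $ i))"

definition form_norm_sq :: "(real^2 \<Rightarrow> real^2 \<Rightarrow> real) \<Rightarrow> (real^2 \<Rightarrow> real^2 \<Rightarrow> real) \<Rightarrow> real^2 \<Rightarrow> real" where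
  "form_norm_sq \<alpha> \<beta> x = form_coeffs \<beta> x \<bullet> (matrix_inv (metric_coeffs \<alpha> x) *v form_coeffs \<beta> x)"

definition closed_form_on :: "(real^2) set \<Rightarrow> (real^2 \<Rightarrow> real^2 \<Rightarrow> real) \<Rightarrow> bool" where
  "closed_form_on S \<beta> \<longleftrightarrow>
     (\<exists>D1 D2. \<forall>x\<in>S. ((\<lambda>y. form_coeffs \<beta> y $ 1) has_derivative D1 x) (at x) \<and>
                     ((\<lambda>y. form_coeffs \<beta> y $ 2) has_derivative D2 x) (at x) \<and>
                     D1 x (axis 2 1) = D2 x (axis 1 1))"

definition randers_on :: "(real^2) set \<Rightarrow> (real^2 \<Rightarrow> real^2 \<Rightarrow> real) \<Rightarrow>
    (real^2 \<Rightarrow> real^2 \<Rightarrow> real) \<Rightarrow> (real^2 \<Rightarrow> real^2 \<Rightarrow> real) \<Rightarrow> bool" where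
  "randers_on S F \<alpha> \<beta> \<longleftrightarrow>
     (\<forall>x\<in>S. \<forall>\<xi>. F x \<xi> = \<alpha> x \<xi> + \<beta> x \<xi>) \<and> riemannian_on S \<alpha> \<and> one_form_on S \<beta> \<and>
     (\<forall>x\<in>S. form_norm_sq \<alpha> \<beta> x < 1)"

end

theory Submission
  imports Defs
begin


lemma norm_line: "(norm (x + s *\<^sub>R v))\<^sup>2 = x \<bullet> x + 2* s*(x \<bullet> v) + s\<^sup>2*(v \<bullet> v)"
  for x v :: "'a::real_inner"
  unfolding power2_norm_eq_inner by (simp add: inner_add_left inner_add_right inner_commute power2_eq_square algebra_simps)

lemma ray_unique:
  fixes y v :: "'a::real_inner"
  assumes "norm y < R" "s > 0" "norm (y + s *\<^sub>R v) = R" "t > 0" "norm (y + t *\<^sub>R v) = R"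
  shows "s = t"
proof (rule ccontr)
  assume ne: "s \<noteq> t"
  have e1: "y \<bullet> y + 2* s*(y \<bullet> v) + s\<^sup>2*(v \<bullet> v) = R\<^sup>2" using norm_line[of y s v] assms by simp
  have e2: "y \<bullet> y + 2* t*(y \<bullet> v) + t\<^sup>2*(v \<bullet> v) = R\<^sup>2" using norm_line[of y t v] assms by simp
  have "(s - t) * ((v \<bullet> v)*(s+t) + 2*(y \<bullet> v)) = 0" using e1 e2 by (simp add: algebra_simps power2_eq_square)
  hence p: "2*(y \<bullet> v) = - (v \<bullet> v)*(s+t)" using ne by simp
  have "R\<^sup>2 - y \<bullet> y = s * (2*(y \<bullet> v)) + s\<^sup>2*(v \<bullet> v)" using e1 by (simp add: algebra_simps)
  also have "\<dots> = - (v \<bullet> v) * s * t" unfolding p by (simp add: algebra_simps power2_eq_square)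
  finally have "R\<^sup>2 - y \<bullet> y = - (v \<bullet> v) * s * t" .
  moreover have "(v \<bullet> v) * s * t \<ge> 0" using assms by simp
  moreover have "y \<bullet> y < R\<^sup>2" using assms(1)
    by (metis norm_ge_zero power2_norm_eq_inner power_strict_mono zero_less_numeral)
  ultimately show False by linarith
qed

lemma ray_hit_eq:
  fixes y v :: "real^2"
  assumes "norm y < R" "s > 0" "norm (y + s *\<^sub>R v) = R"
  shows "ray_hit y v R = y + s *\<^sub>R v"
  unfolding ray_hit_def
proof (rule the_equality)
  show "\<exists>s'>0. y + s *\<^sub>R v = y + s' *\<^sub>R v \<and> norm (y + s *\<^sub>R v) = R" using assms by auto
  fix p assume "\<exists>s'>0. p = y + s' *\<^sub>R v \<and> norm p = R"
  then obtain t where "t > 0" "p = y + t *\<^sub>R v" "norm p = R" by auto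
  with ray_unique[OF assms(1,2,3), of t] show "p = y + s *\<^sub>R v" by simp
qed

lemma root_line:
  fixes y v :: "'a::real_inner"
  assumes "v \<noteq> 0" "norm y < R" "\<sigma> = 1 \<or> \<sigma> = -1"
  defines "s \<equiv> (-(y \<bullet> v) + \<sigma> * sqrt ((y \<bullet> v)\<^sup>2 + (v \<bullet> v)*(R\<^sup>2 - y \<bullet> y))) / (v \<bullet> v)"
  shows "norm (y + s *\<^sub>R v) = R"
proof -
  have n: "v \<bullet> v > 0" using assms by simp
  have R: "R > 0" using assms(2) norm_ge_zero[of y] by linarith
  have "y \<bullet> y < R\<^sup>2" using assms(2)
    by (metis norm_ge_zero power2_norm_eq_inner power_strict_mono zero_less_numeral)
  hence D: "(y \<bullet> v)\<^sup>2 + (v \<bullet> v)*(R\<^sup>2 - y \<bullet> y) \<ge> 0" using n by (simp add: add_nonneg_nonneg)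
  have sq: "(sqrt ((y \<bullet> v)\<^sup>2 + (v \<bullet> v)*(R\<^sup>2 - y \<bullet> y)))\<^sup>2 = (y \<bullet> v)\<^sup>2 + (v \<bullet> v)*(R\<^sup>2 - y \<bullet> y)"
    using D by simp
  have ss: "\<sigma>\<^sup>2 = 1" using assms(3) by auto
  define d where "d = sqrt ((y \<bullet> v)\<^sup>2 + (v \<bullet> v)*(R\<^sup>2 - y \<bullet> y))"
  have sq': "d\<^sup>2 = (y \<bullet> v)\<^sup>2 + (v \<bullet> v)*(R\<^sup>2 - y \<bullet> y)" using sq d_def by simp
  have ns: "(v \<bullet> v) * s = -(y \<bullet> v) + \<sigma> * d" unfolding s_def d_def using n by simp
  have "(v \<bullet> v) * (norm (y + s *\<^sub>R v))\<^sup>2 = (v \<bullet> v)*(y \<bullet> y) + 2*(y \<bullet> v)*((v \<bullet> v) * s) + ((v \<bullet> v) * s)\<^sup>2"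
    unfolding norm_line by (simp add: algebra_simps power2_eq_square)
  also have "\<dots> = (v \<bullet> v)*(y \<bullet> y) - (y \<bullet> v)\<^sup>2 + \<sigma>\<^sup>2 * d\<^sup>2" unfolding ns by (simp add: algebra_simps power2_eq_square)
  also have "\<dots> = (v \<bullet> v) * R\<^sup>2" unfolding ss sq' by (simp add: algebra_simps)
  finally have "(norm (y + s *\<^sub>R v))\<^sup>2 = R\<^sup>2" using n by simp
  thus ?thesis using R by (metis norm_ge_zero power2_eq_imp_eq less_le)
qed



lemma coth_lnQ:
  assumes "Q > 0" "Q \<noteq> 1"
  shows "coth (ln Q / 2) = (Q + 1) / (Q - 1)"
proof -
  define e where "e = exp (ln Q / 2)"
  have e0: "e > 0" unfolding e_def by simp
  have ee: "e * e = Q" unfolding e_def using assms by (simp flip: exp_add)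
  have "e * e \<noteq> 1" using ee assms by simp
  have h: "\<And>z::real. 2 *\<^sub>R (z /\<^sub>R 2) = z" by simp
  have "coth (ln Q / 2) = (2 *\<^sub>R cosh (ln Q / 2)) / (2 *\<^sub>R sinh (ln Q / 2))"
    by (simp add: coth_def scaleR_conv_of_real)
  also have "\<dots> = (e + inverse e) / (e - inverse e)"
    unfolding cosh_def sinh_def e_def h by (simp add: exp_minus)
  also have "\<dots> = (e*e + 1) / (e*e - 1)" using e0 \<open>e * e \<noteq> 1\<close> by (simp add: field_simps)
  finally show ?thesis using ee by simp
qed

lemma alg:
  fixes a b p n m r :: real
  assumes n: "n > 0" and mr: "m < r\<^sup>2" and r1: "r\<^sup>2 < 1"
    and a2: "a\<^sup>2 = p\<^sup>2 + n*(1-m)" and b2: "b\<^sup>2 = p\<^sup>2 + n*(r\<^sup>2-m)" and a0: "a \<ge> 0" and b0: "b \<ge> 0"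
  defines "t \<equiv> (-p+a)/n" and "s \<equiv> (-p+b)/n" and "\<tau> \<equiv> (-p-a)/n"
  defines "Q \<equiv> (t*(s-\<tau>))/((t-s)*(-\<tau>))"
  shows "s > 0" "t > s" "\<tau> < 0" "Q > 0" "Q \<noteq> 1"
    "(Q+1)/(Q-1) * (a/(1-m)) = b/(r\<^sup>2-m) + (1-r\<^sup>2)*p/((r\<^sup>2-m)*(1-m))"
proof -
  have "b\<^sup>2 > p\<^sup>2" using b2 n mr by simp
  hence "\<bar>p\<bar> < b" using b0 power2_less_imp_less[of "\<bar>p\<bar>" b] by simp
  hence bp: "b > p" "b > -p" by auto
  have "a\<^sup>2 > b\<^sup>2" using a2 b2 n r1 by simp
  hence ab: "a > b" using a0 b0 by (meson power_mono not_less)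
  show "s > 0" unfolding s_def using bp n by simp
  show "t > s" unfolding t_def s_def using ab n by (simp add: divide_strict_right_mono)
  show "\<tau> < 0" unfolding \<tau>_def using ab bp n by (simp add: divide_neg_pos)
  have d1: "a - p > 0" "a + b > 0" "a - b > 0" "a + p > 0" using ab bp by auto
  have st: "s - \<tau> = (a+b)/n" unfolding s_def \<tau>_def by (simp add: diff_divide_distrib[symmetric])
  have ts: "t - s = (a-b)/n" unfolding s_def t_def by (simp add: diff_divide_distrib[symmetric])
  have mt: "-\<tau> = (a+p)/n" unfolding \<tau>_def by (simp add: minus_divide_left)
  have tt: "t = (a-p)/n" unfolding t_def by simp
  have Qe: "Q = ((a-p)*(a+b))/((a-b)*(a+p))" unfolding Q_def st ts mt unfolding tt using n by simp
  show "Q > 0" unfolding Qe using d1 by simp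
  have den: "(a-b)*(a+p) > 0" using d1 by simp
  have Qp: "Q + 1 = 2*(a\<^sup>2 - p*b)/((a-b)*(a+p))" unfolding Qe using den
    by (simp add: field_simps power2_eq_square)
  have Qm: "Q - 1 = 2*a*(b-p)/((a-b)*(a+p))" unfolding Qe using den
    by (simp add: field_simps power2_eq_square)
  have "a > 0" using ab b0 by simp
  hence "Q - 1 \<noteq> 0" unfolding Qm using den bp d1 by simp
  thus "Q \<noteq> 1" by simp
  have gen: "\<And>X Y D::real. D \<noteq> 0 \<Longrightarrow> (2*X/D)/(2*Y/D) = X/Y" by simp
  have rat: "(Q+1)/(Q-1) = (a\<^sup>2 - p*b)/(a*(b-p))" unfolding Qp Qm
    using gen[of "(a-b)*(a+p)" "a\<^sup>2 - p*b" "a*(b-p)"] den d1 by (simp add: mult.assoc right_diff_distrib)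
  have m1: "1 - m > 0" "r\<^sup>2 - m > 0" using mr r1 by auto
  have key: "(a\<^sup>2 - p*b)*(r\<^sup>2-m) = (b*(1-m) + (1-r\<^sup>2)*p)*(b-p)"
  proof -
    have "(b*(1-m) + (1-r\<^sup>2)*p)*(b-p) = b\<^sup>2*(1-m) + (m - r\<^sup>2)*p*b - (1-r\<^sup>2)*p\<^sup>2"
      by (simp add: algebra_simps power2_eq_square)
    also have "\<dots> = (p\<^sup>2 + n*(r\<^sup>2-m))*(1-m) + (m - r\<^sup>2)*p*b - (1-r\<^sup>2)*p\<^sup>2" unfolding b2 ..
    also have "\<dots> = (a\<^sup>2 - p*b)*(r\<^sup>2-m)" unfolding a2 by (simp add: algebra_simps)
    finally show ?thesis by simp
  qed
  show "(Q+1)/(Q-1) * (a/(1-m)) = b/(r\<^sup>2-m) + (1-r\<^sup>2)*p/((r\<^sup>2-m)*(1-m))"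
  proof -
    have "(Q+1)/(Q-1) * (a/(1-m)) = (a\<^sup>2 - p*b)/((b-p)*(1-m))" unfolding rat using \<open>a>0\<close> by simp
    also have "\<dots> = (b*(1-m) + (1-r\<^sup>2)*p)/((r\<^sup>2-m)*(1-m))"
    proof -
      have "(a\<^sup>2 - p*b)*((r\<^sup>2-m)*(1-m)) = (b*(1-m) + (1-r\<^sup>2)*p)*((b-p)*(1-m))"
        using key by (metis mult.assoc)
      moreover have "(b-p)*(1-m) \<noteq> 0" "(r\<^sup>2-m)*(1-m) \<noteq> 0" using m1 bp by auto
      ultimately show ?thesis by (simp add: frac_eq_eq)
    qed
    also have "\<dots> = b/(r\<^sup>2-m) + (1-r\<^sup>2)*p/((r\<^sup>2-m)*(1-m))"
      using m1 by (simp add: add_divide_distrib)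
    finally show ?thesis .
  qed
qed


lemma klein_r_bounds: "0 < klein_r" "klein_r < 1"
proof -
  have e: "exp (2::real) > 1" by simp
  have e2: "exp (2::real) - 1 > 0" "exp (2::real) + 1 > 0" using e by linarith+
  show "0 < klein_r" unfolding klein_r_def using e2 by (rule divide_pos_pos)
  show "klein_r < 1" unfolding klein_r_def using e by (simp add: pos_divide_less_eq[OF e2(2)])
qed

lemma dist_line: "dist (x + s *\<^sub>R v) (x + t *\<^sub>R v) = \<bar>s - t\<bar> * norm v" for x v :: "real^2"
proof -
  have "(x + s *\<^sub>R v) - (x + t *\<^sub>R v) = (s - t) *\<^sub>R v" by (simp add: algebra_simps)
  thus ?thesis by (simp add: dist_norm)
qed

lemma FF_eq:
  fixes x \<xi> :: "real^2"
  assumes xr: "norm x < klein_r" and \<xi>: "\<xi> \<noteq> 0"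
  shows "FF x \<xi> = alpha_F x \<xi> + beta_F x \<xi>"
proof -
  define r where "r = klein_r"
  have r0: "0 < r" "r < 1" using klein_r_bounds r_def by auto
  define n where "n = \<xi> \<bullet> \<xi>"
  define p where "p = x \<bullet> \<xi>"
  define m where "m = x \<bullet> x"
  have n0: "n > 0" using \<xi> n_def by simp
  have mr: "m < r\<^sup>2" using xr unfolding m_def r_def
    by (metis norm_ge_zero power2_norm_eq_inner power_strict_mono zero_less_numeral)
  have r1: "r\<^sup>2 < 1" using r0 by (simp add: power_less_one_iff)
  have x1: "norm x < 1" using xr r0 r_def by simp
  define a where "a = sqrt (p\<^sup>2 + n*(1-m))"
  define b where "b = sqrt (p\<^sup>2 + n*(r\<^sup>2-m))"
  have a2: "a\<^sup>2 = p\<^sup>2 + n*(1-m)" unfolding a_def using n0 mr r1 by (simp add: add_nonneg_nonneg)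
  have b2: "b\<^sup>2 = p\<^sup>2 + n*(r\<^sup>2-m)" unfolding b_def using n0 mr by (simp add: add_nonneg_nonneg)
  have D1: "0 \<le> p\<^sup>2 + n*(1-m)" "0 \<le> p\<^sup>2 + n*(r\<^sup>2-m)" using n0 mr r1 by (simp_all add: add_nonneg_nonneg)
  have a0: "a \<ge> 0" and b0: "b \<ge> 0" unfolding a_def b_def using D1 by auto
  define t where "t = (-p+a)/n"
  define s where "s = (-p+b)/n"
  define \<tau> where "\<tau> = (-p-a)/n"
  define Q where "Q = (t*(s-\<tau>))/((t-s)*(-\<tau>))"
  note AL = alg[OF n0 mr r1 a2 b2 a0 b0, folded t_def s_def \<tau>_def, folded Q_def]
  have nt: "norm (x + t *\<^sub>R \<xi>) = 1"
    using root_line[OF \<xi> x1, of 1] unfolding t_def a_def n_def p_def m_def by simp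
  have ntau: "norm (x + \<tau> *\<^sub>R \<xi>) = 1"
    using root_line[OF \<xi> x1, of "-1"] unfolding \<tau>_def a_def n_def p_def m_def by (simp add: diff_divide_distrib)
  have ns: "norm (x + s *\<^sub>R \<xi>) = r"
    using root_line[OF \<xi> xr[folded r_def], of 1] unfolding s_def b_def n_def p_def m_def by simp
  define P where "P = x + s *\<^sub>R \<xi>"
  have hitP: "ray_hit x \<xi> klein_r = P"
    unfolding P_def r_def[symmetric] by (rule ray_hit_eq[OF xr[folded r_def] AL(1) ns])
  have "P \<noteq> x" unfolding P_def using AL(1) \<xi> by simp
  hence xP: "x \<noteq> P" by metis
  have Pmx: "P - x = s *\<^sub>R \<xi>" unfolding P_def by simp
  have xmP: "x - P = (-s) *\<^sub>R \<xi>" unfolding P_def by simp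
  have hA: "ray_hit x (P - x) 1 = x + t *\<^sub>R \<xi>"
  proof -
    have e: "x + (t/s) *\<^sub>R (s *\<^sub>R \<xi>) = x + t *\<^sub>R \<xi>" using AL(1) by simp
    have "t / s > 0" using AL(1,2) by simp
    from ray_hit_eq[OF x1 this, of "s *\<^sub>R \<xi>"] show ?thesis unfolding Pmx e using nt by simp
  qed
  have hB: "ray_hit P (x - P) 1 = x + \<tau> *\<^sub>R \<xi>"
  proof -
    have c: "((s - \<tau>)/s) * (-s) = \<tau> - s" using AL(1) by (simp add: field_simps)
    have e: "P + ((s - \<tau>)/s) *\<^sub>R ((-s) *\<^sub>R \<xi>) = x + \<tau> *\<^sub>R \<xi>" unfolding P_def scaleR_scaleR c
      by (simp add: algebra_simps)
    have "(s - \<tau>)/s > 0" using AL(1,3) by simp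
    moreover have "norm P < 1" using ns r0 P_def by simp
    ultimately show ?thesis using ray_hit_eq[of P 1 "(s - \<tau>)/s" "(-s) *\<^sub>R \<xi>"] unfolding xmP e using ntau by simp
  qed
  have nx: "\<And>c. dist x (x + c *\<^sub>R \<xi>) = \<bar>c\<bar> * norm \<xi>"
    using dist_line[of x 0 \<xi>] by simp
  have d1: "dist x (x + t *\<^sub>R \<xi>) = t * norm \<xi>" using nx[of t] AL(1,2) by simp
  have d2: "dist P (x + \<tau> *\<^sub>R \<xi>) = (s - \<tau>) * norm \<xi>" unfolding P_def dist_line using AL(1,3) by simp
  have d3: "dist P (x + t *\<^sub>R \<xi>) = (t - s) * norm \<xi>" unfolding P_def dist_line using AL(2) by simp
  have d4: "dist x (x + \<tau> *\<^sub>R \<xi>) = (-\<tau>) * norm \<xi>" using nx[of \<tau>] AL(3) by simp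
  have nxi: "norm \<xi> > 0" using \<xi> by simp
  have kd: "klein_dist x P = ln Q / 2"
  proof -
    have "(t * norm \<xi> * ((s - \<tau>) * norm \<xi>)) / ((t - s) * norm \<xi> * ((-\<tau>) * norm \<xi>))
       = (t*(s-\<tau>) * (norm \<xi> * norm \<xi>)) / (((t-s)*(-\<tau>)) * (norm \<xi> * norm \<xi>))"
      by (simp only: ac_simps)
    also have "\<dots> = Q" unfolding Q_def using nxi by simp
    finally have "(t * norm \<xi> * ((s - \<tau>) * norm \<xi>)) / ((t - s) * norm \<xi> * ((-\<tau>) * norm \<xi>)) = Q" .
    thus ?thesis unfolding klein_dist_def Let_def hA hB d1 d2 d3 d4 using xP by simp
  qed
  have aK: "alpha_K x \<xi> = a / (1-m)"
    unfolding alpha_K_def a_def m_def n_def p_def power2_norm_eq_inner by (simp add: algebra_simps)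
  have aF: "alpha_F x \<xi> = b / (r\<^sup>2-m)"
    unfolding alpha_F_def b_def m_def n_def p_def power2_norm_eq_inner r_def by (simp add: algebra_simps)
  have bF: "beta_F x \<xi> = (1-r\<^sup>2)*p/((r\<^sup>2-m)*(1-m))"
    unfolding beta_F_def m_def p_def power2_norm_eq_inner r_def by simp
  show ?thesis unfolding FF_def hitP kd aK aF bF coth_lnQ[OF AL(4,5)] using \<xi> AL(6) by simp
qed



definition DKs :: "(real^2) set" where "DKs = {x. norm x < klein_r}"

lemma open_DKs: "open DKs"
proof -
  have "DKs = ball 0 klein_r" unfolding DKs_def ball_def by (simp add: dist_norm)
  thus ?thesis by (metis open_ball)
qed

inductive good :: "(real^2 \<Rightarrow> real) \<Rightarrow> bool" where
  gconst: "good (\<lambda>x. c)"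
| gcoord: "good (\<lambda>x. x $ i)"
| gadd: "good f \<Longrightarrow> good g \<Longrightarrow> good (\<lambda>x. f x + g x)"
| gmult: "good f \<Longrightarrow> good g \<Longrightarrow> good (\<lambda>x. f x * g x)"
| ginv: "good f \<Longrightarrow> (\<forall>x\<in>DKs. f x \<noteq> 0) \<Longrightarrow> good (\<lambda>x. inverse (f x))"

lemma gneg: "good f \<Longrightarrow> good (\<lambda>x. - f x)"
proof -
  assume "good f"
  hence "good (\<lambda>x. (-1) * f x)" by (intro gmult gconst)
  thus ?thesis by simp
qed

lemma gdiff: "good f \<Longrightarrow> good g \<Longrightarrow> good (\<lambda>x. f x - g x)"
proof -
  assume "good f" "good g"
  hence "good (\<lambda>x. f x + - g x)" by (intro gadd gneg)
  thus ?thesis by simp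
qed

lemma good_deriv:
  "good f \<Longrightarrow> \<exists>g::2\<Rightarrow>real^2\<Rightarrow>real. (\<forall>i. good (g i)) \<and>
     (\<forall>x\<in>DKs. (f has_derivative (\<lambda>h. h$1 * g 1 x + h$2 * g 2 x)) (at x))"
proof (induction rule: good.induct)
  case (gconst c)
  show ?case by (rule exI[of _ "\<lambda>i x. 0"]) (auto intro: good.gconst)
next
  case (gcoord j)
  show ?case
  proof (rule exI[of _ "\<lambda>i x. if i = j then 1 else 0"], intro conjI ballI allI)
    fix i show "good (\<lambda>x. if i = j then 1 else 0::real)" by (rule good.gconst)
  next
    fix x :: "real^2"
    have "((\<lambda>x. x $ j) has_derivative (\<lambda>h. h $ j)) (at x)"
      by (rule bounded_linear_imp_has_derivative) (rule bounded_linear_vec_nth)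
    moreover have "(\<lambda>h::real^2. h $ j) = (\<lambda>h. h$1 * (if 1 = j then 1 else 0) + h$2 * (if 2 = j then 1 else 0))"
      using exhaust_2[of j] by auto
    ultimately show "((\<lambda>x. x $ j) has_derivative (\<lambda>h. h$1 * (if 1 = j then 1 else 0) + h$2 * (if 2 = j then 1 else 0))) (at x)"
      by simp
  qed
next
  case (gadd f g)
  then obtain F G :: "2 \<Rightarrow> real^2 \<Rightarrow> real" where F: "\<forall>i. good (F i)" "\<forall>x\<in>DKs. (f has_derivative (\<lambda>h. h$1 * F 1 x + h$2 * F 2 x)) (at x)"
    and G: "\<forall>i. good (G i)" "\<forall>x\<in>DKs. (g has_derivative (\<lambda>h. h$1 * G 1 x + h$2 * G 2 x)) (at x)" by blast
  show ?case
  proof (rule exI[of _ "\<lambda>i x. F i x + G i x"], intro conjI ballI allI)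
    fix i show "good (\<lambda>x. F i x + G i x)" using F G by (intro good.gadd) auto
  next
    fix x assume x: "x \<in> DKs"
    show "((\<lambda>x. f x + g x) has_derivative (\<lambda>h. h$1 * (F 1 x + G 1 x) + h$2 * (F 2 x + G 2 x))) (at x)"
      using has_derivative_add[OF F(2)[rule_format, OF x] G(2)[rule_format, OF x]]
      by (simp add: algebra_simps)
  qed
next
  case (gmult f g)
  then obtain F G :: "2 \<Rightarrow> real^2 \<Rightarrow> real" where F: "\<forall>i. good (F i)" "\<forall>x\<in>DKs. (f has_derivative (\<lambda>h. h$1 * F 1 x + h$2 * F 2 x)) (at x)"
    and G: "\<forall>i. good (G i)" "\<forall>x\<in>DKs. (g has_derivative (\<lambda>h. h$1 * G 1 x + h$2 * G 2 x)) (at x)" by blast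
  show ?case
  proof (rule exI[of _ "\<lambda>i x. f x * G i x + F i x * g x"], intro conjI ballI allI)
    fix i show "good (\<lambda>x. f x * G i x + F i x * g x)" using F G gmult by (intro good.gadd good.gmult) auto
  next
    fix x assume x: "x \<in> DKs"
    show "((\<lambda>x. f x * g x) has_derivative (\<lambda>h. h$1 * (f x * G 1 x + F 1 x * g x) + h$2 * (f x * G 2 x + F 2 x * g x))) (at x)"
      using has_derivative_mult[OF F(2)[rule_format, OF x] G(2)[rule_format, OF x]]
      by (simp add: algebra_simps)
  qed
next
  case (ginv f)
  then obtain F :: "2 \<Rightarrow> real^2 \<Rightarrow> real" where F: "\<forall>i. good (F i)" "\<forall>x\<in>DKs. (f has_derivative (\<lambda>h. h$1 * F 1 x + h$2 * F 2 x)) (at x)"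
    by blast
  show ?case
  proof (rule exI[of _ "\<lambda>i x. - (inverse (f x) * F i x * inverse (f x))"], intro conjI ballI allI)
    fix i show "good (\<lambda>x. - (inverse (f x) * F i x * inverse (f x)))" using F ginv
      by (intro gneg good.gmult good.ginv) auto
  next
    fix x assume x: "x \<in> DKs"
    show "((\<lambda>x. inverse (f x)) has_derivative (\<lambda>h. h$1 * - (inverse (f x) * F 1 x * inverse (f x)) + h$2 * - (inverse (f x) * F 2 x * inverse (f x)))) (at x)"
      using Deriv.has_derivative_inverse[OF _ F(2)[rule_format, OF x]] ginv x
      by (simp add: algebra_simps)
  qed
qed

lemma good_Ck: "good f \<Longrightarrow> (\<forall>x\<in>DKs. g x = f x) \<Longrightarrow> C_k k DKs g"
proof (induction k arbitrary: f g)
  case 0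
  obtain F :: "2 \<Rightarrow> real^2 \<Rightarrow> real" where F: "\<forall>x\<in>DKs. (f has_derivative (\<lambda>h. h$1 * F 1 x + h$2 * F 2 x)) (at x)"
    using good_deriv[OF 0(1)] by blast
  have "continuous_on DKs f"
    using F has_derivative_continuous continuous_at_imp_continuous_on by blast
  hence "continuous_on DKs g" using 0(2) continuous_on_cong by force
  thus ?case by simp
next
  case (Suc k)
  obtain F :: "2 \<Rightarrow> real^2 \<Rightarrow> real" where F: "\<forall>i. good (F i)" "\<forall>x\<in>DKs. (f has_derivative (\<lambda>h. h$1 * F 1 x + h$2 * F 2 x)) (at x)"
    using good_deriv[OF Suc(2)] by blast
  define D where "D = (\<lambda>x (h::real^2). h$1 * F 1 x + h$2 * F 2 x)"
  have "\<forall>x\<in>DKs. (g has_derivative D x) (at x)"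
  proof
    fix x assume x: "x \<in> DKs"
    show "(g has_derivative D x) (at x)" unfolding D_def
      by (rule has_derivative_transform_within_open[OF F(2)[rule_format, OF x] open_DKs x])
         (use Suc(3) in auto)
  qed
  moreover have "\<forall>i. C_k k DKs (\<lambda>x. D x (axis i 1))"
  proof
    fix i :: 2
    have "\<And>x. D x (axis i 1) = F i x" unfolding D_def using exhaust_2[of i] by (auto simp: axis_def)
    thus "C_k k DKs (\<lambda>x. D x (axis i 1))" using Suc.IH[OF F(1)[rule_format, of i]] by simp
  qed
  ultimately show ?case by auto
qed

lemma good_smooth: "good f \<Longrightarrow> (\<forall>x\<in>DKs. g x = f x) \<Longrightarrow> smooth_on DKs g"
  unfolding smooth_on_def using good_Ck by blast



lemma inner2: "x \<bullet> y = x$1*y$1 + x$2*y$2" for x y :: "real^2"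
  by (simp add: inner_vec_def sum_2)

lemma quad2: "\<xi> \<bullet> (M *v \<xi>) = \<xi>$1*(M$1$1*\<xi>$1 + M$1$2*\<xi>$2) + \<xi>$2*(M$2$1*\<xi>$1 + M$2$2*\<xi>$2)"
  for \<xi> :: "real^2" and M :: "real^2^2"
  by (simp add: inner_vec_def matrix_vector_mult_def sum_2)

lemma DKs_m: "x \<in> DKs \<Longrightarrow> x \<bullet> x < klein_r\<^sup>2"
  unfolding DKs_def
  by (metis mem_Collect_eq norm_ge_zero power2_norm_eq_inner power_strict_mono zero_less_numeral)

lemma DKs_c: "x \<in> DKs \<Longrightarrow> klein_r\<^sup>2 - x \<bullet> x > 0" using DKs_m by simp

lemma r2_lt1: "klein_r\<^sup>2 < 1" using klein_r_bounds by (simp add: power_less_one_iff)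

lemma DKs_1m: "x \<in> DKs \<Longrightarrow> 1 - x \<bullet> x > 0" using DKs_m r2_lt1 by fastforce

lemma good_mm: "good (\<lambda>x. x$1*x$1 + x$2*x$2)"
  by (intro gadd gmult gcoord)

lemma good_c: "good (\<lambda>x. klein_r\<^sup>2 - (x$1*x$1 + x$2*x$2))"
  by (intro gdiff gconst good_mm)

lemma good_ic: "good (\<lambda>x. inverse (klein_r\<^sup>2 - (x$1*x$1 + x$2*x$2)))"
proof (intro ginv good_c ballI)
  fix x assume "x \<in> DKs"
  from DKs_c[OF this] show "klein_r\<^sup>2 - (x$1*x$1 + x$2*x$2) \<noteq> 0" by (simp add: inner2)
qed

lemma good_i1m: "good (\<lambda>x. inverse (1 - (x$1*x$1 + x$2*x$2)))"
proof (intro ginv gdiff gconst good_mm ballI)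
  fix x assume "x \<in> DKs"
  from DKs_1m[OF this] show "1 - (x$1*x$1 + x$2*x$2) \<noteq> 0" by (simp add: inner2)
qed

lemma aF_sq:
  assumes "x \<in> DKs"
  shows "(alpha_F x v)\<^sup>2 = ((klein_r\<^sup>2 - x \<bullet> x)*(v \<bullet> v) + (x \<bullet> v)\<^sup>2)/(klein_r\<^sup>2 - x \<bullet> x)\<^sup>2"
proof -
  have c: "klein_r\<^sup>2 - x \<bullet> x > 0" using DKs_c assms by simp
  have "(klein_r\<^sup>2 - x \<bullet> x)*(v \<bullet> v) + (x \<bullet> v)\<^sup>2 \<ge> 0" using c by simp
  thus ?thesis unfolding alpha_F_def power2_norm_eq_inner by (simp add: power_divide)
qed

lemma aF_nonneg: "x \<in> DKs \<Longrightarrow> alpha_F x v \<ge> 0"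
  unfolding alpha_F_def power2_norm_eq_inner using DKs_c[of x]
  by (intro divide_nonneg_pos) (auto intro!: add_nonneg_nonneg)

lemma mc:
  assumes x: "x \<in> DKs"
  shows "metric_coeffs alpha_F x $ i $ j =
     ((klein_r\<^sup>2 - x \<bullet> x) * (if i = j then 1 else 0) + x$i*x$j) / (klein_r\<^sup>2 - x \<bullet> x)\<^sup>2"
proof -
  define c where "c = klein_r\<^sup>2 - x \<bullet> x"
  have c: "c > 0" using DKs_c x c_def by simp
  have ii: "axis k (1::real) \<bullet> axis l 1 = (if k = l then 1 else 0)" for k l :: 2
    by (simp add: inner_axis_axis)
  have xi: "x \<bullet> axis k 1 = x $ k" for k by (simp add: inner_axis)
  show ?thesis
  proof (cases "i = j")
    case True
    have aa: "axis j 1 + axis j 1 = (2::real) *\<^sub>R axis j (1::real)" by (simp add: scaleR_2)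
    show ?thesis
      unfolding metric_coeffs_def vec_lambda_beta aF_sq[OF x] c_def[symmetric] True aa using c
      by (simp add: inner_scaleR_left inner_scaleR_right ii xi inner_commute[of "axis _ 1" x],
        simp add: field_simps power2_eq_square)
  next
    case False
    show ?thesis
      unfolding metric_coeffs_def vec_lambda_beta aF_sq[OF x] c_def[symmetric] using c False
      by (simp add: inner_add_left inner_add_right ii xi inner_commute[of "axis _ 1" x],
        simp add: field_simps power2_eq_square)
  qed
qed



lemma quadF:
  assumes x: "x \<in> DKs"
  shows "\<xi> \<bullet> (metric_coeffs alpha_F x *v \<xi>) =
     ((klein_r\<^sup>2 - x \<bullet> x)*(\<xi> \<bullet> \<xi>) + (x \<bullet> \<xi>)\<^sup>2)/(klein_r\<^sup>2 - x \<bullet> x)\<^sup>2"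
proof -
  define c where "c = klein_r\<^sup>2 - x \<bullet> x"
  have c: "c > 0" using DKs_c x c_def by simp
  show ?thesis unfolding quad2 mc[OF x] c_def[symmetric] using c
    by (simp add: inner2[of \<xi> \<xi>] inner2[of x \<xi>], simp add: field_simps power2_eq_square)
qed

lemma riem: "riemannian_on DKs alpha_F"
  unfolding riemannian_on_def
proof (intro conjI ballI allI impI)
  fix x \<xi> assume x: "x \<in> DKs"
  have "alpha_F x \<xi> = sqrt ((alpha_F x \<xi>)\<^sup>2)" using aF_nonneg[OF x] by simp
  also have "\<dots> = sqrt (\<xi> \<bullet> (metric_coeffs alpha_F x *v \<xi>))" unfolding quadF[OF x] aF_sq[OF x] ..
  finally show "alpha_F x \<xi> = sqrt (\<xi> \<bullet> (metric_coeffs alpha_F x *v \<xi>))" .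
next
  fix x assume x: "x \<in> DKs"
  show "transpose (metric_coeffs alpha_F x) = metric_coeffs alpha_F x"
    unfolding vec_eq_iff transpose_def by (auto simp: mc[OF x] mult.commute)
next
  fix x \<xi> assume x: "x \<in> DKs" and \<xi>: "(\<xi>::real^2) \<noteq> 0"
  have c: "klein_r\<^sup>2 - x \<bullet> x > 0" using DKs_c x by simp
  have "(klein_r\<^sup>2 - x \<bullet> x)*(\<xi> \<bullet> \<xi>) > 0" using c \<xi> by simp
  hence "(klein_r\<^sup>2 - x \<bullet> x)*(\<xi> \<bullet> \<xi>) + (x \<bullet> \<xi>)\<^sup>2 > 0"
    by (metis add_pos_nonneg zero_le_power2)
  thus "\<xi> \<bullet> (metric_coeffs alpha_F x *v \<xi>) > 0" unfolding quadF[OF x] using c by simp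
next
  fix i j :: 2
  let ?d = "if i = j then 1 else (0::real)"
  have g: "good (\<lambda>x. ((klein_r\<^sup>2 - (x$1*x$1 + x$2*x$2)) * ?d + x$i*x$j) *
      inverse (klein_r\<^sup>2 - (x$1*x$1 + x$2*x$2)) * inverse (klein_r\<^sup>2 - (x$1*x$1 + x$2*x$2)))"
    by (intro gmult gadd good_c gconst gcoord good_ic)
  show "smooth_on DKs (\<lambda>x. metric_coeffs alpha_F x $ i $ j)"
  proof (rule good_smooth[OF g], intro ballI)
    fix x assume x: "x \<in> DKs"
    show "metric_coeffs alpha_F x $ i $ j = ((klein_r\<^sup>2 - (x$1*x$1 + x$2*x$2)) * ?d + x$i*x$j) *
      inverse (klein_r\<^sup>2 - (x$1*x$1 + x$2*x$2)) * inverse (klein_r\<^sup>2 - (x$1*x$1 + x$2*x$2))"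
      unfolding mc[OF x] inner2[of x x] by (simp add: divide_inverse power2_eq_square)
  qed
qed



lemma fc: "form_coeffs beta_F x $ i = (1-klein_r\<^sup>2)*x$i/((klein_r\<^sup>2 - x \<bullet> x)*(1 - x \<bullet> x))"
  unfolding form_coeffs_def beta_F_def power2_norm_eq_inner by (simp add: inner_axis)

lemma oneform: "one_form_on DKs beta_F"
  unfolding one_form_on_def
proof (intro conjI ballI allI)
  fix x \<xi> assume x: "x \<in> DKs"
  define K where "K = (1-klein_r\<^sup>2)/((klein_r\<^sup>2 - x \<bullet> x)*(1 - x \<bullet> x))"
  have "form_coeffs beta_F x = K *\<^sub>R x" unfolding vec_eq_iff fc K_def by simp
  moreover have "beta_F x \<xi> = K * (x \<bullet> \<xi>)" unfolding beta_F_def power2_norm_eq_inner K_def by simp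
  ultimately show "beta_F x \<xi> = form_coeffs beta_F x \<bullet> \<xi>" by simp
next
  fix i :: 2
  have g: "good (\<lambda>x. ((1-klein_r\<^sup>2)*x$i) * inverse (klein_r\<^sup>2 - (x$1*x$1 + x$2*x$2))
              * inverse (1 - (x$1*x$1 + x$2*x$2)))"
    by (intro gmult gconst gcoord good_ic good_i1m)
  show "smooth_on DKs (\<lambda>x. form_coeffs beta_F x $ i)"
    by (rule good_smooth[OF g]) (simp add: fc inner2 divide_inverse)
qed

lemma matrix_inv_apply:
  fixes M :: "real^2^2"
  assumes inj: "\<And>v. M *v v = 0 \<Longrightarrow> v = 0" and eq: "M *v y = z"
  shows "matrix_inv M *v z = y"
proof -
  have "\<exists>B. B ** M = mat 1" using inj matrix_left_invertible_ker by blast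
  hence "invertible M" using invertible_left_inverse by blast
  hence "\<exists>A'. M ** A' = mat 1 \<and> A' ** M = mat 1" unfolding invertible_def .
  hence "M ** matrix_inv M = mat 1 \<and> matrix_inv M ** M = mat 1"
    unfolding matrix_inv_def by (rule someI_ex)
  hence "matrix_inv M ** M = mat 1" by simp
  thus ?thesis using eq by (metis matrix_vector_mul_assoc matrix_vector_mul_lid)
qed

lemma fns:
  assumes x: "x \<in> DKs"
  shows "form_norm_sq alpha_F beta_F x
     = (norm x)\<^sup>2 * (1 - klein_r\<^sup>2)\<^sup>2 / (klein_r\<^sup>2 * (1 - (norm x)\<^sup>2)\<^sup>2)"
    and "form_norm_sq alpha_F beta_F x < 1"
proof -
  define M where "M = metric_coeffs alpha_F x"
  define r where "r = klein_r"
  define m where "m = x \<bullet> x"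
  define c where "c = r\<^sup>2 - m"
  have c: "c > 0" using DKs_c[OF x] c_def r_def m_def by simp
  have m1: "1 - m > 0" using DKs_1m[OF x] m_def by simp
  have r: "r > 0" using klein_r_bounds r_def by simp
  have r1: "r\<^sup>2 < 1" using r2_lt1 r_def by simp
  have m0: "m \<ge> 0" unfolding m_def by simp
  define k where "k = (1-r\<^sup>2)/(c*(1-m))"
  have b: "form_coeffs beta_F x = k *\<^sub>R x"
    unfolding vec_eq_iff fc k_def c_def r_def m_def by simp
  have m2: "x$1*x$1 + x$2*x$2 = m" unfolding m_def inner2 ..
  have rcm: "r\<^sup>2 = c + m" unfolding c_def by simp
  have mcx: "M $ i $ j = (c * (if i = j then 1 else 0) + x$i*x$j) / c\<^sup>2" for i j
    unfolding M_def mc[OF x] c_def r_def m_def ..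
  have Mx: "M *v x = (r\<^sup>2/c\<^sup>2) *\<^sub>R x"
  proof (unfold vec_eq_iff, intro allI)
    fix i :: 2
    have "(M *v x)$i = M$i$1*x$1 + M$i$2*x$2" by (simp add: matrix_vector_mult_def sum_2)
    also have "\<dots> = (c * (if i = 1 then 1 else 0) * x$1 + c * (if i = 2 then 1 else 0) * x$2
                + x$i * (x$1*x$1 + x$2*x$2)) / c\<^sup>2"
      unfolding mcx by (simp add: add_divide_distrib algebra_simps)
    also have "\<dots> = (r\<^sup>2/c\<^sup>2) * x$i" unfolding m2 rcm using c exhaust_2[of i]
      by (auto simp: field_simps)
    finally show "(M *v x)$i = ((r\<^sup>2/c\<^sup>2) *\<^sub>R x)$i" by simp
  qed
  have inj: "M *v v = 0 \<Longrightarrow> v = 0" for v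
  proof (rule ccontr)
    assume "M *v v = 0" "v \<noteq> 0"
    with riem x have "v \<bullet> (M *v v) > 0" unfolding riemannian_on_def M_def by blast
    with \<open>M *v v = 0\<close> show False by simp
  qed
  have "M *v ((c\<^sup>2/r\<^sup>2) *\<^sub>R form_coeffs beta_F x) = form_coeffs beta_F x"
    unfolding b matrix_vector_mult_scaleR Mx using c r by simp
  hence inv: "matrix_inv M *v form_coeffs beta_F x = (c\<^sup>2/r\<^sup>2) *\<^sub>R form_coeffs beta_F x"
    using matrix_inv_apply[of M] inj by blast
  have val: "form_norm_sq alpha_F beta_F x = m * (1-r\<^sup>2)\<^sup>2 / (r\<^sup>2 * (1-m)\<^sup>2)"
  proof -
    have "form_norm_sq alpha_F beta_F x = k * (c\<^sup>2/r\<^sup>2) * k * m"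
      unfolding form_norm_sq_def M_def[symmetric] inv unfolding b m_def by simp
    also have "\<dots> = m * (1-r\<^sup>2)\<^sup>2 / (r\<^sup>2 * (1-m)\<^sup>2)"
    proof -
      have gen: "\<And>c u v r m::real. c \<noteq> 0 \<Longrightarrow> u \<noteq> 0 \<Longrightarrow> r \<noteq> 0 \<Longrightarrow>
          (v/(c*u)) * (c\<^sup>2/r\<^sup>2) * (v/(c*u)) * m = m * v\<^sup>2 / (r\<^sup>2 * u\<^sup>2)"
        by (simp add: field_simps power2_eq_square)
      show ?thesis unfolding k_def using gen[of c "1-m" r "1-r\<^sup>2" m] c r m1 by simp
    qed
    finally show ?thesis .
  qed
  show "form_norm_sq alpha_F beta_F x
     = (norm x)\<^sup>2 * (1 - klein_r\<^sup>2)\<^sup>2 / (klein_r\<^sup>2 * (1 - (norm x)\<^sup>2)\<^sup>2)"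
    unfolding val power2_norm_eq_inner m_def r_def ..
  have id: "r\<^sup>2 * (1-m)\<^sup>2 - m * (1-r\<^sup>2)\<^sup>2 = c * (1 - r\<^sup>2*m)"
    unfolding c_def by (simp add: algebra_simps power2_eq_square)
  have "r\<^sup>2*m < r\<^sup>2*1" using m1 r by (intro mult_strict_left_mono) auto
  hence "1 - r\<^sup>2*m > 0" using r1 by simp
  hence "c * (1 - r\<^sup>2*m) > 0" using c by simp
  hence lt: "m * (1-r\<^sup>2)\<^sup>2 < r\<^sup>2 * (1-m)\<^sup>2" using id by simp
  have "r\<^sup>2 * (1-m)\<^sup>2 > 0" using r m1 by simp
  thus "form_norm_sq alpha_F beta_F x < 1" unfolding val using lt by (simp add: pos_divide_less_eq)
qed



lemma dmm: "((\<lambda>y::real^2. y \<bullet> y) has_derivative (\<lambda>h. 2*(x \<bullet> h))) (at x)"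
proof -
  have "((\<lambda>y::real^2. y \<bullet> y) has_derivative (\<lambda>h. x \<bullet> h + h \<bullet> x)) (at x)"
    by (rule has_derivative_inner[OF has_derivative_ident has_derivative_ident])
  thus ?thesis by (simp add: inner_commute)
qed

lemma dlin: "((\<lambda>y::real^2. a - y \<bullet> y) has_derivative (\<lambda>h. - (2*(x \<bullet> h)))) (at x)"
  using has_derivative_diff[OF has_derivative_const dmm] by simp

lemma fgen:
  fixes c u p r2 :: real
  assumes "c \<noteq> 0" "u \<noteq> 0" "r2 - c = 1 - u"
  shows "inverse 2 * ((- u * (inverse c * - (2 * p) * inverse c) + - (2 * p) / c) * inverse (u / c))
     = (1 - r2) * p / (c * u)"
proof -
  have r2: "r2 = 1 - u + c" using assms(3) by simp
  show ?thesis unfolding r2 using assms(1,2) by (simp add: field_simps)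
qed

lemma fpot_deriv:
  assumes x: "x \<in> DKs"
  shows "(f_pot has_derivative beta_F x) (at x)"
proof -
  define r where "r = klein_r"
  have fe: "f_pot = (\<lambda>y. inverse 2 * ln ((1 - y \<bullet> y)/(r\<^sup>2 - y \<bullet> y)))"
    unfolding f_pot_def power2_norm_eq_inner r_def by (simp add: field_simps)
  have c: "r\<^sup>2 - x \<bullet> x > 0" using DKs_c[OF x] r_def by simp
  have m1: "1 - x \<bullet> x > 0" using DKs_1m[OF x] .
  note dq = has_derivative_divide[OF dlin[of 1 x] dlin[of "r\<^sup>2" x]]
  have q0: "0 < (1 - x \<bullet> x)/(r\<^sup>2 - x \<bullet> x)" using c m1 by simp
  note dl = DERIV_compose_FDERIV[OF DERIV_ln[OF q0] dq]
  note d2 = has_derivative_mult_right[OF dl, of "inverse 2"]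
  have eq: "(\<lambda>h. inverse 2 * ((- (1 - x \<bullet> x) * (inverse (r\<^sup>2 - x \<bullet> x) * - (2 * (x \<bullet> h)) * inverse (r\<^sup>2 - x \<bullet> x)) +
        - (2 * (x \<bullet> h)) / (r\<^sup>2 - x \<bullet> x)) * inverse ((1 - x \<bullet> x) / (r\<^sup>2 - x \<bullet> x)))) = beta_F x"
  proof
    fix h
    show "inverse 2 * ((- (1 - x \<bullet> x) * (inverse (r\<^sup>2 - x \<bullet> x) * - (2 * (x \<bullet> h)) * inverse (r\<^sup>2 - x \<bullet> x)) +
        - (2 * (x \<bullet> h)) / (r\<^sup>2 - x \<bullet> x)) * inverse ((1 - x \<bullet> x) / (r\<^sup>2 - x \<bullet> x))) = beta_F x h"
      unfolding beta_F_def power2_norm_eq_inner r_def[symmetric]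
      by (rule fgen) (use c m1 in auto)
  qed
  show ?thesis unfolding fe eq[symmetric] by (rule d2) (use c in simp)
qed



definition Dk :: "2 \<Rightarrow> real^2 \<Rightarrow> real^2 \<Rightarrow> real" where
  "Dk k x h = - ((1-klein_r\<^sup>2) * x$k) *
      (inverse ((klein_r\<^sup>2 - x \<bullet> x)*(1 - x \<bullet> x)) *
       (- (2*(x \<bullet> h)) * (1 - x \<bullet> x) + (klein_r\<^sup>2 - x \<bullet> x) * - (2*(x \<bullet> h)))
       * inverse ((klein_r\<^sup>2 - x \<bullet> x)*(1 - x \<bullet> x)))
    + (1-klein_r\<^sup>2) * h$k / ((klein_r\<^sup>2 - x \<bullet> x)*(1 - x \<bullet> x))"

lemma fc_deriv:
  assumes x: "x \<in> DKs"
  shows "((\<lambda>y. form_coeffs beta_F y $ k) has_derivative Dk k x) (at x)"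
proof -
  have fe: "(\<lambda>y. form_coeffs beta_F y $ k) =
     (\<lambda>y. ((1-klein_r\<^sup>2) * y$k) / ((klein_r\<^sup>2 - y \<bullet> y)*(1 - y \<bullet> y)))"
    unfolding fc ..
  have nz: "(klein_r\<^sup>2 - x \<bullet> x)*(1 - x \<bullet> x) \<noteq> 0" using DKs_c[OF x] DKs_1m[OF x] by simp
  have dn: "((\<lambda>y::real^2. (1-klein_r\<^sup>2) * y$k) has_derivative (\<lambda>h. (1-klein_r\<^sup>2) * h$k)) (at x)"
    by (intro has_derivative_mult_right bounded_linear_imp_has_derivative bounded_linear_vec_nth)
  note du = has_derivative_mult[OF dlin[of "klein_r\<^sup>2" x] dlin[of 1 x]]
  note dd = has_derivative_divide[OF dn du nz]
  show ?thesis unfolding fe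
    by (rule has_derivative_eq_rhs[OF dd]) (simp add: Dk_def fun_eq_iff)
qed

lemma closed: "closed_form_on DKs beta_F"
  unfolding closed_form_on_def
proof (rule exI[of _ "Dk 1"], rule exI[of _ "Dk 2"], intro ballI conjI)
  fix x assume x: "x \<in> DKs"
  show "((\<lambda>y. form_coeffs beta_F y $ 1) has_derivative Dk 1 x) (at x)" by (rule fc_deriv[OF x])
  show "((\<lambda>y. form_coeffs beta_F y $ 2) has_derivative Dk 2 x) (at x)" by (rule fc_deriv[OF x])
  show "Dk 1 x (axis 2 1) = Dk 2 x (axis 1 1)"
    unfolding Dk_def inner_axis by (simp add: axis_def algebra_simps)
qed


theorem theorem3p1:
  defines "DK \<equiv> {x :: real^2. norm x < klein_r}"
  shows "(\<forall>x\<in>DK. \<forall>\<xi>. FF x \<xi> = alpha_F x \<xi> + beta_F x \<xi>)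
    \<and> riemannian_on DK alpha_F
    \<and> one_form_on DK beta_F
    \<and> (\<forall>x\<in>DK. (f_pot has_derivative beta_F x) (at x))
    \<and> closed_form_on DK beta_F
    \<and> (\<forall>x\<in>DK. form_norm_sq alpha_F beta_F x
           = (norm x)\<^sup>2 * (1 - klein_r\<^sup>2)\<^sup>2 / (klein_r\<^sup>2 * (1 - (norm x)\<^sup>2)\<^sup>2)
         \<and> form_norm_sq alpha_F beta_F x < 1)
    \<and> randers_on DK FF alpha_F beta_F"
proof -
  have DK: "DK = DKs" unfolding DK_def DKs_def ..
  have F: "\<forall>x\<in>DKs. \<forall>\<xi>. FF x \<xi> = alpha_F x \<xi> + beta_F x \<xi>"
  proof (intro ballI allI)
    fix x \<xi> assume x: "x \<in> DKs"
    show "FF x \<xi> = alpha_F x \<xi> + beta_F x \<xi>"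
    proof (cases "\<xi> = 0")
      case True
      thus ?thesis by (simp add: FF_def alpha_F_def beta_F_def)
    next
      case False
      thus ?thesis using FF_eq x unfolding DKs_def by blast
    qed
  qed
  have N: "\<forall>x\<in>DKs. form_norm_sq alpha_F beta_F x
           = (norm x)\<^sup>2 * (1 - klein_r\<^sup>2)\<^sup>2 / (klein_r\<^sup>2 * (1 - (norm x)\<^sup>2)\<^sup>2)
         \<and> form_norm_sq alpha_F beta_F x < 1" using fns by blast
  show ?thesis unfolding DK randers_on_def
    using F riem oneform fpot_deriv closed N by blast
qed

end
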